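(* Let $\Delta$, $A$, $p$ and $V$ be as in the context. If there exists $S=\{s_1,\dots,s_n\}\subset\Gamma$ with $(s_i|s_j)=\langle\alpha_i,\alpha_j\rangle \pmod p$ for all $i,j$ (and $s_i\ne s_j$ for $i\ne j$ if $p=2$), and the rank $m$ of $V$ satisfies $m<n$, then $p$ divides $\det(A)$.
   Context: Let $\Delta\subset\mathbb{R}^n$ be a simply laced root system of full rank (so $\langle\beta,\beta\rangle=2$ for all roots), with simple roots $\alpha_1,\dots,\alpha_n$, and let $A$ be the $n\times n$ integer matrix $A_{ij}=\langle\alpha_i,\alpha_j\rangle$. Let $p\ge2$ be an integer, $V$ a free $\mathbb{Z}/p$-module of rank $m$ with a symmetric bilinear form $(\cdot|\cdot)$ with values in $\mathbb{Z}/p$, and $\Gamma=\{x\in V\setminus\{0\}:(x|x)=2\}$. *)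

theory Defs
  imports "HOL-Analysis.Analysis"
begin

definition refl_root :: "real^'n \<Rightarrow> real^'n \<Rightarrow> real^'n" where
  "refl_root a x = x - (2 * (x \<bullet> a) / (a \<bullet> a)) *\<^sub>R a"

definition root_system :: "(real^'n) set \<Rightarrow> bool" where
  "root_system D \<longleftrightarrow> finite D \<and> 0 \<notin> D \<and> span D = UNIV
     \<and> (\<forall>a\<in>D. \<forall>b\<in>D. refl_root a b \<in> D)
     \<and> (\<forall>a\<in>D. \<forall>b\<in>D. 2 * (b \<bullet> a) / (a \<bullet> a) \<in> \<int>)
     \<and> (\<forall>a\<in>D. \<forall>c::real. c *\<^sub>R a \<in> D \<longrightarrow> c = 1 \<or> c = -1)"

definition simply_laced_root_system :: "(real^'n) set \<Rightarrow> bool" where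
  "simply_laced_root_system D \<longleftrightarrow> root_system D \<and> (\<forall>b\<in>D. b \<bullet> b = 2)"

definition simple_roots :: "(real^'n) set \<Rightarrow> ('n \<Rightarrow> real^'n) \<Rightarrow> bool" where
  "simple_roots D al \<longleftrightarrow> inj al \<and> range al \<subseteq> D \<and> independent (range al)
     \<and> (\<forall>b\<in>D. \<exists>c :: 'n \<Rightarrow> int. b = (\<Sum>i\<in>UNIV. of_int (c i) *\<^sub>R al i)
              \<and> ((\<forall>i. c i \<ge> 0) \<or> (\<forall>i. c i \<le> 0)))"

text \<open>The free Z/p-module V of rank m, realised as (Z/p)^m: vectors are functions
  nat => int supported on {..<m} with entries in the residue system {0..<p}.
  A symmetric bilinear form with values in Z/p is given by a symmetric matrix B
  (entries taken mod p); its values are represented in {0..<p}.\<close>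

definition Vmod :: "int \<Rightarrow> nat \<Rightarrow> (nat \<Rightarrow> int) set" where
  "Vmod p m = {x. (\<forall>i<m. 0 \<le> x i \<and> x i < p) \<and> (\<forall>i\<ge>m. x i = 0)}"

definition bform :: "int \<Rightarrow> nat \<Rightarrow> (nat \<Rightarrow> nat \<Rightarrow> int) \<Rightarrow> (nat \<Rightarrow> int) \<Rightarrow> (nat \<Rightarrow> int) \<Rightarrow> int" where
  "bform p m B x y = (\<Sum>i<m. \<Sum>j<m. x i * B i j * y j) mod p"

definition Gamma :: "int \<Rightarrow> nat \<Rightarrow> (nat \<Rightarrow> nat \<Rightarrow> int) \<Rightarrow> (nat \<Rightarrow> int) set" where
  "Gamma p m B = {x \<in> Vmod p m. x \<noteq> (\<lambda>_. 0) \<and> bform p m B x x = 2 mod p}"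

end

theory Submission
  imports Defs
begin

lemma det_cong_mod:
  fixes A C :: "int^'n^'n" and p :: int
  assumes "\<And>i j. A $ i $ j mod p = C $ i $ j mod p"
  shows "det A mod p = det C mod p"
proof -
  have t: "(of_int (sign q) * (\<Prod>i\<in>UNIV. A $ i $ q i)) mod p
         = (of_int (sign q) * (\<Prod>i\<in>UNIV. C $ i $ q i)) mod p" for q :: "'n \<Rightarrow> 'n"
  proof -
    have "(\<Prod>i\<in>UNIV. A $ i $ q i) mod p = (\<Prod>i\<in>UNIV. A $ i $ q i mod p) mod p"
      by (simp add: mod_prod_eq)
    also have "\<dots> = (\<Prod>i\<in>UNIV. C $ i $ q i mod p) mod p" using assms by simp
    also have "\<dots> = (\<Prod>i\<in>UNIV. C $ i $ q i) mod p" by (simp add: mod_prod_eq)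
    finally have e: "(\<Prod>i\<in>UNIV. A $ i $ q i) mod p = (\<Prod>i\<in>UNIV. C $ i $ q i) mod p" .
    have "(of_int (sign q) * (\<Prod>i\<in>UNIV. A $ i $ q i)) mod p
        = (of_int (sign q) * ((\<Prod>i\<in>UNIV. A $ i $ q i) mod p)) mod p"
      by (rule mod_mult_right_eq[symmetric])
    also have "\<dots> = (of_int (sign q) * ((\<Prod>i\<in>UNIV. C $ i $ q i) mod p)) mod p"
      by (simp only: e)
    also have "\<dots> = (of_int (sign q) * (\<Prod>i\<in>UNIV. C $ i $ q i)) mod p"
      by (rule mod_mult_right_eq)
    finally show ?thesis .
  qed
  let ?P = "{q. q permutes (UNIV::'n set)}"
  have "det A mod p = (\<Sum>q\<in>?P. (of_int (sign q) * (\<Prod>i\<in>UNIV. A $ i $ q i)) mod p) mod p"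
    unfolding det_def by (rule mod_sum_eq[symmetric])
  also have "\<dots> = (\<Sum>q\<in>?P. (of_int (sign q) * (\<Prod>i\<in>UNIV. C $ i $ q i)) mod p) mod p"
    by (simp only: t)
  also have "\<dots> = det C mod p"
    unfolding det_def by (rule mod_sum_eq)
  finally show ?thesis .
qed

theorem mainTheorem4:
  fixes D :: "(real^'n) set" and al :: "'n \<Rightarrow> real^'n" and A :: "int^'n^'n"
    and p :: int and m :: nat and B :: "nat \<Rightarrow> nat \<Rightarrow> int" and s :: "'n \<Rightarrow> (nat \<Rightarrow> int)"
  assumes "simply_laced_root_system D"
    and "simple_roots D al"
    and "\<And>i j. real_of_int (A $ i $ j) = al i \<bullet> al j"
    and "p \<ge> 2"
    and "\<And>i j. i < m \<Longrightarrow> j < m \<Longrightarrow> B i j = B j i"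
    and sG: "\<And>i. s i \<in> Gamma p m B"
    and bf: "\<And>i j. bform p m B (s i) (s j) = A $ i $ j mod p"
    and "p = 2 \<Longrightarrow> inj s"
    and mn: "m < CARD('n)"
  shows "p dvd det A"
proof -
  obtain g where g: "bij_betw g (UNIV::'n set) {0..<CARD('n)}"
    using ex_bij_betw_finite_nat[of "UNIV::'n set"] by auto
  have s0: "s i k = 0" if "k \<ge> m" for i k
    using sG[of i] that unfolding Gamma_def Vmod_def by auto
  define V where "V k j = (\<Sum>l<m. B k l * s j l)" for k j
  define S :: "int^'n^'n" where "S = (\<chi> i t. s i (g t))"
  define W :: "int^'n^'n" where "W = (\<chi> t j. V (g t) j)"
  have prod: "(S ** W) $ i $ j = (\<Sum>k<m. \<Sum>l<m. s i k * B k l * s j l)" for i j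
  proof -
    have "(S ** W) $ i $ j = (\<Sum>t\<in>UNIV. s i (g t) * V (g t) j)"
      by (simp add: S_def W_def matrix_matrix_mult_def)
    also have "\<dots> = (\<Sum>k\<in>{0..<CARD('n)}. s i k * V k j)"
      using sum.reindex_bij_betw[OF g, of "\<lambda>k. s i k * V k j"] by simp
    also have "\<dots> = (\<Sum>k\<in>{0..<m}. s i k * V k j)"
      by (rule sum.mono_neutral_right) (use mn s0 in auto)
    also have "\<dots> = (\<Sum>k<m. \<Sum>l<m. s i k * B k l * s j l)"
      by (simp add: V_def sum_distrib_left mult.assoc atLeast0LessThan)
    finally show ?thesis .
  qed
  obtain t0 where t0: "g t0 = m"
    using g mn unfolding bij_betw_def by (metis atLeastLessThan_iff imageE zero_le)
  have "column t0 S = 0"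
    by (simp add: column_def S_def vec_eq_iff t0 s0)
  hence "det S = 0" by (rule det_zero_column(1))
  hence d0: "det (S ** W) = 0" by (simp add: det_mul)
  have "det A mod p = det (S ** W) mod p"
  proof (rule det_cong_mod)
    fix i j
    show "A $ i $ j mod p = (S ** W) $ i $ j mod p"
      using bf[of i j] prod[of i j] unfolding bform_def by simp
  qed
  thus ?thesis using d0 by (simp add: dvd_eq_mod_eq_0)
qed

end
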